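(* Let $\mathcal{Y}=\{0,1\}$, let $y_t\in\{0,1\}$ and $v_t\in[0,1]$ for $t\in T=\{1,\dots,n\}$, and let $s\colon\{0,1\}\times[0,1]\to[-1,1]$ be a consistent scoring function for the mean, i.e. $\mathbb{E}_{\phi}[s(\cdot,p)]\le\mathbb{E}_\phi[s(\cdot,c)]$ for every $p,c\in[0,1]$ where $\phi$ is Bernoulli($p$). For $\gamma\in\{v_t:t\in T\}$ let $T_\gamma=\{t:v_t=\gamma\}$. Then $$\sup_{\sigma\colon[0,1]\to[0,1]}\sum_{t\in T}\big(s(y_t,v_t)-s(y_t,\sigma(v_t))\big)\ \le\ 4\sum_{\gamma\in\{v_t:t\in T\}}|T_\gamma|\,\Big|\frac1{|T_\gamma|}\sum_{t\in T_\gamma}y_t-\gamma\Big|.$$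
   Context: $\mathbb{E}_\phi[f]=\phi(\{0\})f(0)+\phi(\{1\})f(1)$ for a distribution $\phi$ on $\{0,1\}$; Bernoulli($p$) puts mass $p$ on $1$. *)

theory Defs
  imports Complex_Main
begin

definition bern_expect :: "real \<Rightarrow> (real \<Rightarrow> real) \<Rightarrow> real" where
  "bern_expect p f = (1 - p) * f 0 + p * f 1"

definition consistent_mean :: "(real \<Rightarrow> real \<Rightarrow> real) \<Rightarrow> bool" where
  "consistent_mean s \<longleftrightarrow>
     (\<forall>p\<in>{0..1}. \<forall>c\<in>{0..1}. bern_expect p (\<lambda>y. s y p) \<le> bern_expect p (\<lambda>y. s y c))"

end

theory Submission
  imports Defs
begin

lemma group_bound:
  fixes A :: "nat set" and y :: "nat \<Rightarrow> real" and s :: "real \<Rightarrow> real \<Rightarrow> real"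
  assumes fin: "finite A" and y01: "\<forall>t\<in>A. y t \<in> {0, 1}"
    and g: "g \<in> {0..1}" and c: "c \<in> {0..1}"
    and s_range: "\<forall>a\<in>{0, 1}. \<forall>p\<in>{0..1}. s a p \<in> {-1..1}"
    and s_cons: "consistent_mean s"
  shows "(\<Sum>t\<in>A. s (y t) g - s (y t) c) \<le> 4 * \<bar>(\<Sum>t\<in>A. y t) - real (card A) * g\<bar>"
proof -
  define d where "d x = s 1 x - s 0 x" for x
  have e: "s (y t) g - s (y t) c = (s 0 g - s 0 c) + y t * (d g - d c)" if "t \<in> A" for t
    using y01 that by (auto simp: d_def algebra_simps)
  have eq1: "(\<Sum>t\<in>A. s (y t) g - s (y t) c) = real (card A) * (s 0 g - s 0 c) + (\<Sum>t\<in>A. y t) * (d g - d c)"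
    by (simp add: sum.cong[OF refl e] sum.distrib sum_distrib_right)
  moreover have "(1 - g) * s 0 g + g * s 1 g \<le> (1 - g) * s 0 c + g * s 1 c"
    using s_cons g c unfolding consistent_mean_def bern_expect_def by blast
  hence "s 0 g - s 0 c \<le> - g * (d g - d c)" by (simp add: d_def algebra_simps)
  moreover have "\<bar>d g - d c\<bar> \<le> 4"
  proof -
    have "s 0 g \<in> {-1..1}" "s 1 g \<in> {-1..1}" "s 0 c \<in> {-1..1}" "s 1 c \<in> {-1..1}"
      using s_range g c by auto
    thus ?thesis unfolding d_def abs_le_iff by auto
  qed
  ultimately have "(\<Sum>t\<in>A. s (y t) g - s (y t) c) \<le> ((\<Sum>t\<in>A. y t) - real (card A) * g) * (d g - d c)"
  proof -
    have "real (card A) * (s 0 g - s 0 c) \<le> real (card A) * (- g * (d g - d c))"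
      using \<open>s 0 g - s 0 c \<le> - g * (d g - d c)\<close> by (rule mult_left_mono) simp
    thus ?thesis using eq1 by (simp add: algebra_simps)
  qed
  also have "\<dots> \<le> \<bar>(\<Sum>t\<in>A. y t) - real (card A) * g\<bar> * \<bar>d g - d c\<bar>"
    by (metis abs_ge_self abs_mult)
  also have "\<dots> \<le> \<bar>(\<Sum>t\<in>A. y t) - real (card A) * g\<bar> * 4"
    using \<open>\<bar>d g - d c\<bar> \<le> 4\<close> by (simp add: mult_left_mono)
  finally show ?thesis by simp
qed

theorem mainTheorem19:
  fixes n :: nat and y v :: "nat \<Rightarrow> real" and s :: "real \<Rightarrow> real \<Rightarrow> real"
  assumes y01: "\<forall>t\<in>{1..n}. y t \<in> {0, 1}"
    and v01: "\<forall>t\<in>{1..n}. v t \<in> {0..1}"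
    and s_range: "\<forall>a\<in>{0, 1}. \<forall>p\<in>{0..1}. s a p \<in> {-1..1}"
    and s_cons: "consistent_mean s"
  shows "\<forall>\<sigma> :: real \<Rightarrow> real. (\<forall>x\<in>{0..1}. \<sigma> x \<in> {0..1}) \<longrightarrow>
           (\<Sum>t\<in>{1..n}. s (y t) (v t) - s (y t) (\<sigma> (v t)))
           \<le> 4 * (\<Sum>\<gamma>\<in>v ` {1..n}.
                   real (card {t\<in>{1..n}. v t = \<gamma>}) *
                   \<bar>(\<Sum>t\<in>{t\<in>{1..n}. v t = \<gamma>}. y t) / real (card {t\<in>{1..n}. v t = \<gamma>}) - \<gamma>\<bar>)"
proof (intro allI impI)
  fix \<sigma> :: "real \<Rightarrow> real"
  assume sig: "\<forall>x\<in>{0..1}. \<sigma> x \<in> {0..1}"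
  let ?A = "\<lambda>\<gamma>. {t\<in>{1..n}. v t = \<gamma>}"
  have "(\<Sum>t\<in>{1..n}. s (y t) (v t) - s (y t) (\<sigma> (v t)))
      = (\<Sum>\<gamma>\<in>v ` {1..n}. \<Sum>t\<in>?A \<gamma>. s (y t) (v t) - s (y t) (\<sigma> (v t)))"
    by (rule sum.image_gen[of "{1..n}"]) simp
  also have "\<dots> = (\<Sum>\<gamma>\<in>v ` {1..n}. \<Sum>t\<in>?A \<gamma>. s (y t) \<gamma> - s (y t) (\<sigma> \<gamma>))"
    by (intro sum.cong refl) auto
  also have "\<dots> \<le> (\<Sum>\<gamma>\<in>v ` {1..n}. 4 * (real (card (?A \<gamma>)) *
                   \<bar>(\<Sum>t\<in>?A \<gamma>. y t) / real (card (?A \<gamma>)) - \<gamma>\<bar>))"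
  proof (rule sum_mono)
    fix \<gamma> assume h: "\<gamma> \<in> v ` {1..n}"
    then obtain t0 where t0: "t0 \<in> {1..n}" "v t0 = \<gamma>" by auto
    have g: "\<gamma> \<in> {0..1}" using v01 t0 by auto
    have ne: "card (?A \<gamma>) > 0" using t0 by (auto simp: card_gt_0_iff)
    have "(\<Sum>t\<in>?A \<gamma>. s (y t) \<gamma> - s (y t) (\<sigma> \<gamma>)) \<le> 4 * \<bar>(\<Sum>t\<in>?A \<gamma>. y t) - real (card (?A \<gamma>)) * \<gamma>\<bar>"
      by (rule group_bound) (use y01 g sig s_range s_cons in auto)
    also have "\<bar>(\<Sum>t\<in>?A \<gamma>. y t) - real (card (?A \<gamma>)) * \<gamma>\<bar>
        = real (card (?A \<gamma>)) * \<bar>(\<Sum>t\<in>?A \<gamma>. y t) / real (card (?A \<gamma>)) - \<gamma>\<bar>"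
    proof -
      have "(\<Sum>t\<in>?A \<gamma>. y t) - real (card (?A \<gamma>)) * \<gamma>
          = real (card (?A \<gamma>)) * ((\<Sum>t\<in>?A \<gamma>. y t) / real (card (?A \<gamma>)) - \<gamma>)"
      proof -
        have nz: "real (card (?A \<gamma>)) \<noteq> 0" using ne by linarith
        show ?thesis using nz by (simp add: right_diff_distrib)
      qed
      thus ?thesis by (simp add: abs_mult)
    qed
    finally show "(\<Sum>t\<in>?A \<gamma>. s (y t) \<gamma> - s (y t) (\<sigma> \<gamma>)) \<le> 4 * (real (card (?A \<gamma>)) *
                   \<bar>(\<Sum>t\<in>?A \<gamma>. y t) / real (card (?A \<gamma>)) - \<gamma>\<bar>)" .
  qed
  also have "\<dots> = 4 * (\<Sum>\<gamma>\<in>v ` {1..n}. real (card (?A \<gamma>)) *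
                   \<bar>(\<Sum>t\<in>?A \<gamma>. y t) / real (card (?A \<gamma>)) - \<gamma>\<bar>)"
    by (simp add: sum_distrib_left)
  finally show "(\<Sum>t\<in>{1..n}. s (y t) (v t) - s (y t) (\<sigma> (v t)))
           \<le> 4 * (\<Sum>\<gamma>\<in>v ` {1..n}.
                   real (card {t\<in>{1..n}. v t = \<gamma>}) *
                   \<bar>(\<Sum>t\<in>{t\<in>{1..n}. v t = \<gamma>}. y t) / real (card {t\<in>{1..n}. v t = \<gamma>}) - \<gamma>\<bar>)" .
qed

end
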